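(* Let $U_n\subset C^n([a,b],\mathbb{K})$ ($\mathbb{K}=\mathbb{R}$ or $\mathbb{C}$, $a\ne b$) be a subspace of dimension $n+1$ possessing a Bernstein basis $p_{n,0},\dots,p_{n,n}$ for $\{a,b\}$ that is locally non-negative at $\{a,b\}$. Let $f_0\in U_n$ be strictly positive and assume that $D_{f_0}U_n$ possesses a Bernstein basis $q_{n-1,0},\dots,q_{n-1,n-1}$ for $\{a,b\}$ that is locally non-negative at $\{a,b\}$. Then the coefficients $\beta_0,\dots,\beta_n$ in the expansion $f_0=\sum_{k=0}^n\beta_kp_{n,k}$ are all positive.
   Context: A function $f\in C^m([a,b],\mathbb{K})$ has a zero of order $k$ at $c$ if $f(c)=\dots=f^{(k-1)}(c)=0$ and $f^{(k)}(c)\ne0$ (one-sided derivatives at endpoints). For an $(m+1)$-dimensional space $V\subset C^m([a,b],\mathbb{K})$, a Bernstein basis for $\{a,b\}$ is a system $p_{m,0},\dots,p_{m,m}$ in $V$ such that each $p_{m,k}$ has a zero of order exactly $k$ at $a$ and of order exactly $m-k$ at $b$. It is locally non-negative at $\{a,b\}$ if its functions are real-valued and there is $\delta>0$ with $p_{m,k}(x)\ge0$ for all $k$ and all $x\in[a,a+\delta)\cup(b-\delta,b]$. For strictly positive (real-valued, $>0$ on $[a,b]$) $f_0\in U_n$, $D_{f_0}U_n:=\{\frac{d}{dx}(f/f_0):f\in U_n\}$. *)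

theory Defs
  imports "HOL-Analysis.Analysis"
begin

text \<open>Scalars: the field K is modelled by a type of class real_normed_field
  (in practice real or complex).  Functions on [a,b] are functions real => K
  whose values outside [a,b] are irrelevant; all derivatives are taken within
  {a..b}, so at the endpoints they are the one-sided derivatives.\<close>

primrec hder :: "real \<Rightarrow> real \<Rightarrow> nat \<Rightarrow> (real \<Rightarrow> 'a::real_normed_vector) \<Rightarrow> real \<Rightarrow> 'a" where
  "hder a b 0 f = f"
| "hder a b (Suc k) f = (\<lambda>x. vector_derivative (hder a b k f) (at x within {a..b}))"

definition Cm_on :: "nat \<Rightarrow> real \<Rightarrow> real \<Rightarrow> (real \<Rightarrow> 'a::real_normed_vector) \<Rightarrow> bool" where
  "Cm_on m a b f \<longleftrightarrow>
     (\<forall>k\<le>m. continuous_on {a..b} (hder a b k f)) \<and>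
     (\<forall>k<m. \<forall>x\<in>{a..b}. (hder a b k f has_vector_derivative hder a b (Suc k) f x) (at x within {a..b}))"

definition zero_order :: "real \<Rightarrow> real \<Rightarrow> (real \<Rightarrow> 'a::real_normed_vector) \<Rightarrow> real \<Rightarrow> nat \<Rightarrow> bool" where
  "zero_order a b f c k \<longleftrightarrow> (\<forall>j<k. hder a b j f c = 0) \<and> hder a b k f c \<noteq> 0"

text \<open>V is a K-linear subspace of C^m([a,b],K) of dimension m+1 (functions are
  identified when they agree on [a,b]): it has m+1 elements that are linearly
  independent on [a,b] and span V on [a,b].\<close>
definition Cm_subspace_dim :: "nat \<Rightarrow> real \<Rightarrow> real \<Rightarrow> (real \<Rightarrow> 'a::real_normed_field) set \<Rightarrow> bool" where
  "Cm_subspace_dim m a b V \<longleftrightarrow>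
     (\<lambda>x. 0) \<in> V \<and>
     (\<forall>f\<in>V. \<forall>g\<in>V. (\<lambda>x. f x + g x) \<in> V) \<and>
     (\<forall>c. \<forall>f\<in>V. (\<lambda>x. c * f x) \<in> V) \<and>
     (\<forall>f\<in>V. Cm_on m a b f) \<and>
     (\<exists>e :: nat \<Rightarrow> real \<Rightarrow> 'a.
        (\<forall>k\<le>m. e k \<in> V) \<and>
        (\<forall>c. (\<forall>x\<in>{a..b}. (\<Sum>k\<le>m. c k * e k x) = 0) \<longrightarrow> (\<forall>k\<le>m. c k = 0)) \<and>
        (\<forall>f\<in>V. \<exists>c. \<forall>x\<in>{a..b}. f x = (\<Sum>k\<le>m. c k * e k x)))"

definition bernstein_basis :: "nat \<Rightarrow> real \<Rightarrow> real \<Rightarrow> (real \<Rightarrow> 'a::real_normed_field) set \<Rightarrow> (nat \<Rightarrow> real \<Rightarrow> 'a) \<Rightarrow> bool" where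
  "bernstein_basis m a b V p \<longleftrightarrow>
     (\<forall>k\<le>m. p k \<in> V \<and> zero_order a b (p k) a k \<and> zero_order a b (p k) b (m - k))"

definition loc_nonneg :: "nat \<Rightarrow> real \<Rightarrow> real \<Rightarrow> (nat \<Rightarrow> real \<Rightarrow> 'a::real_normed_field) \<Rightarrow> bool" where
  "loc_nonneg m a b p \<longleftrightarrow>
     (\<forall>k\<le>m. \<forall>x\<in>{a..b}. p k x \<in> \<real>) \<and>
     (\<exists>\<delta>>0. \<forall>k\<le>m. \<forall>x\<in>{a..b}. (x < a + \<delta> \<or> b - \<delta> < x) \<longrightarrow> (\<exists>r\<ge>0. p k x = of_real r))"

definition Dquot :: "real \<Rightarrow> real \<Rightarrow> (real \<Rightarrow> 'a::real_normed_field) \<Rightarrow> (real \<Rightarrow> 'a) set \<Rightarrow> (real \<Rightarrow> 'a) set" where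
  "Dquot a b f0 U = {hder a b 1 (\<lambda>x. f x / f0 x) | f. f \<in> U}"

end

theory Submission
  imports Defs "HOL-Library.Function_Algebras"
begin

lemma sum_fun_apply': "finite A \<Longrightarrow> (\<Sum>i\<in>A. f i) x = (\<Sum>i\<in>A. f i x)"
  by (induction A rule: finite_induct) auto

lemma span_swap:
  fixes e w :: "nat \<Rightarrow> real \<Rightarrow> 'a::field" and S :: "real set"
  assumes ie: "\<And>c. (\<forall>x\<in>S. (\<Sum>k\<le>m. c k * e k x) = 0) \<Longrightarrow> (\<forall>k\<le>m. c k = 0)"
    and iw: "\<And>c. (\<forall>x\<in>S. (\<Sum>k\<le>m. c k * w k x) = 0) \<Longrightarrow> (\<forall>k\<le>m. c k = 0)"
    and ws: "\<And>j. j \<le> m \<Longrightarrow> \<exists>c. \<forall>x\<in>S. w j x = (\<Sum>k\<le>m. c k * e k x)"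
    and k: "k \<le> m"
  shows "\<exists>c. \<forall>x\<in>S. e k x = (\<Sum>j\<le>m. c j * w j x)"
proof -
  interpret fs: vector_space "\<lambda>(c::'a) (f::real\<Rightarrow>'a) x. c * f x"
    by unfold_locales (auto simp: fun_eq_iff algebra_simps)
  define r where "r f = (\<lambda>x. if x \<in> S then f x else (0::'a))" for f :: "real \<Rightarrow> 'a"
  have sumr: "(\<Sum>i\<in>A. (\<lambda>x. c i * g i x)) x = (\<Sum>i\<in>A. c i * g i x)" if "finite A" for A c g x
    using that by (simp add: sum_fun_apply')
  have inj: "inj_on (\<lambda>k. r (v k)) {..m}"
    if iv: "\<And>c. (\<forall>x\<in>S. (\<Sum>k\<le>m. c k * v k x) = 0) \<Longrightarrow> (\<forall>k\<le>m. c k = 0)" for v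
  proof (rule inj_onI, rule ccontr)
    fix i j assume ij: "i \<in> {..m}" "j \<in> {..m}" "r (v i) = r (v j)" "i \<noteq> j"
    define c where "c k = (if k = i then 1 else if k = j then -1 else (0::'a))" for k
    have "\<forall>x\<in>S. (\<Sum>k\<le>m. c k * v k x) = 0"
    proof
      fix x assume x: "x \<in> S"
      have "v i x = v j x" using ij(3) x unfolding r_def by (metis (mono_tags))
      moreover have "(\<Sum>k\<le>m. c k * v k x) = (\<Sum>k\<in>{i,j}. c k * v k x)"
        using ij by (intro sum.mono_neutral_right) (auto simp: c_def)
      ultimately show "(\<Sum>k\<le>m. c k * v k x) = 0" using ij by (simp add: c_def)
    qed
    from iv[OF this] ij show False by (auto simp: c_def)
  qed
  have indep: "fs.independent ((\<lambda>k. r (v k)) ` {..m})"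
    if iv: "\<And>c. (\<forall>x\<in>S. (\<Sum>k\<le>m. c k * v k x) = 0) \<Longrightarrow> (\<forall>k\<le>m. c k = 0)" for v
  proof (rule fs.independent_if_scalars_zero)
    have injv: "inj_on (\<lambda>k. r (v k)) {..m}" by (rule inj, rule iv, assumption)
    show "finite ((\<lambda>k. r (v k)) ` {..m})" by simp
    fix c v' assume s: "(\<Sum>u\<in>(\<lambda>k. r (v k)) ` {..m}. (\<lambda>x. c u * u x)) = 0"
      and v': "v' \<in> (\<lambda>k. r (v k)) ` {..m}"
    have "\<forall>x\<in>S. (\<Sum>k\<le>m. c (r (v k)) * v k x) = 0"
    proof
      fix x assume x: "x \<in> S"
      have "0 = (\<Sum>u\<in>(\<lambda>k. r (v k)) ` {..m}. (\<lambda>x. c u * u x)) x" using s by simp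
      also have "\<dots> = (\<Sum>u\<in>(\<lambda>k. r (v k)) ` {..m}. c u * u x)" by (simp add: sum_fun_apply')
      also have "\<dots> = (\<Sum>k\<le>m. c (r (v k)) * r (v k) x)"
        by (subst sum.reindex[OF injv]) (unfold comp_def, rule refl)
      also have "\<dots> = (\<Sum>k\<le>m. c (r (v k)) * v k x)" using x by (simp add: r_def)
      finally show "(\<Sum>k\<le>m. c (r (v k)) * v k x) = 0" by simp
    qed
    from iv[OF this] v' show "c v' = 0" by auto
  qed
  have injE: "inj_on (\<lambda>k. r (e k)) {..m}" by (rule inj, rule ie, assumption)
  have injW: "inj_on (\<lambda>k. r (w k)) {..m}" by (rule inj, rule iw, assumption)
  define E where "E = (\<lambda>k. r (e k)) ` {..m}"
  define W where "W = (\<lambda>k. r (w k)) ` {..m}"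
  have iE: "fs.independent E" unfolding E_def by (rule indep[OF ie])
  have iW: "fs.independent W" unfolding W_def by (rule indep[OF iw])
  have cE: "card E = Suc m" unfolding E_def using card_image[OF injE] by simp
  have cW: "card W = Suc m" unfolding W_def using card_image[OF injW] by simp
  have WE: "W \<subseteq> fs.span E"
  proof
    fix u assume "u \<in> W"
    then obtain j where j: "j \<le> m" "u = r (w j)" unfolding W_def by auto
    obtain c where c: "\<forall>x\<in>S. w j x = (\<Sum>k\<le>m. c k * e k x)" using ws[OF j(1)] by blast
    have "u = (\<Sum>k\<le>m. (\<lambda>x. c k * r (e k) x))"
      by (rule ext) (auto simp: j(2) r_def sum_fun_apply' c)
    also have "\<dots> \<in> fs.span E"
      by (intro fs.span_sum fs.span_scale fs.span_base) (auto simp: E_def)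
    finally show "u \<in> fs.span E" .
  qed
  have "r (e k) \<in> fs.span W"
  proof (rule ccontr)
    assume nin: "r (e k) \<notin> fs.span W"
    then have "fs.independent (insert (r (e k)) W)" using iW fs.independent_insertI by blast
    moreover have "insert (r (e k)) W \<subseteq> fs.span E"
      using WE k by (auto simp: E_def intro!: fs.span_base)
    ultimately have "card (insert (r (e k)) W) \<le> card E"
      using fs.independent_span_bound[of E] by (auto simp: E_def)
    moreover have "r (e k) \<notin> W" using nin fs.span_base by blast
    moreover have "finite W" by (simp add: W_def)
    ultimately show False using cE cW by simp
  qed
  then obtain u where u: "r (e k) = (\<Sum>v\<in>W. (\<lambda>x. u v * v x))"
    using fs.span_finite[of W] by (auto simp: W_def)
  have "\<forall>x\<in>S. e k x = (\<Sum>j\<le>m. u (r (w j)) * w j x)"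
  proof
    fix x assume x: "x \<in> S"
    have "e k x = r (e k) x" using x by (simp add: r_def)
    also have "\<dots> = (\<Sum>v\<in>W. u v * v x)" by (simp add: u sum_fun_apply' W_def)
    also have "\<dots> = (\<Sum>j\<le>m. u (r (w j)) * r (w j) x)"
      unfolding W_def by (subst sum.reindex[OF injW]) (unfold comp_def, rule refl)
    also have "\<dots> = (\<Sum>j\<le>m. u (r (w j)) * w j x)" using x by (simp add: r_def)
    finally show "e k x = (\<Sum>j\<le>m. u (r (w j)) * w j x)" .
  qed
  then show ?thesis by (rule exI[where x="\<lambda>j. u (r (w j))"])
qed

lemma vd_within:
  assumes "a < b" "x \<in> {a..b}" "(f has_vector_derivative D) (at x within {a..b})"
  shows "vector_derivative f (at x within {a..b}) = D"
  using vector_derivative_within_cbox[of a b x f D] assms by (simp add: box_real(2))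

lemma hder_Suc': "hder a b (Suc k) f = hder a b k (hder a b 1 f)"
  by (induction k) auto

lemma hder_local:
  assumes "\<forall>x\<in>{a..b}. f x = g x" "x \<in> {a..b}"
  shows "hder a b k f x = hder a b k g x"
  using assms(2)
proof (induction k arbitrary: x)
  case 0 then show ?case using assms(1) by simp
next
  case (Suc k)
  have "vector_derivative (hder a b k f) (at x within {a..b}) =
        vector_derivative (hder a b k g) (at x within {a..b})"
    unfolding vector_derivative_def
  proof (rule arg_cong[where f=Eps], rule ext)
    fix D
    show "(hder a b k f has_vector_derivative D) (at x within {a..b}) =
          (hder a b k g has_vector_derivative D) (at x within {a..b})"
    proof
      assume h: "(hder a b k f has_vector_derivative D) (at x within {a..b})"
      show "(hder a b k g has_vector_derivative D) (at x within {a..b})"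
        by (rule has_vector_derivative_transform_within[OF h zero_less_one]) (use Suc in auto)
    next
      assume h: "(hder a b k g has_vector_derivative D) (at x within {a..b})"
      show "(hder a b k f has_vector_derivative D) (at x within {a..b})"
        by (rule has_vector_derivative_transform_within[OF h zero_less_one]) (use Suc in \<open>auto simp: eq_commute\<close>)
    qed
  qed
  then show ?case by simp
qed

lemma Cm_char:
  assumes ab: "a < b"
    and G0: "\<forall>x\<in>{a..b}. G 0 x = F x"
    and Gc: "\<forall>k\<le>m. continuous_on {a..b} (G k)"
    and Gd: "\<forall>k<m. \<forall>x\<in>{a..b}. (G k has_vector_derivative G (Suc k) x) (at x within {a..b})"
  shows "Cm_on m a b F \<and> (\<forall>k\<le>m. \<forall>x\<in>{a..b}. hder a b k F x = G k x)"
proof -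
  have eq: "\<forall>x\<in>{a..b}. hder a b k F x = G k x" if "k \<le> m" for k
    using that
  proof (induction k)
    case 0 then show ?case using G0 by simp
  next
    case (Suc k)
    have IH: "\<forall>x\<in>{a..b}. hder a b k F x = G k x" using Suc.IH Suc.prems by simp
    show ?case
    proof
      fix x assume x: "x \<in> {a..b}"
      have h: "(G k has_vector_derivative G (Suc k) x) (at x within {a..b})" using Gd Suc.prems x by simp
      have "(hder a b k F has_vector_derivative G (Suc k) x) (at x within {a..b})"
        by (rule has_vector_derivative_transform_within[OF h zero_less_one x]) (use IH in simp)
      then show "hder a b (Suc k) F x = G (Suc k) x" using vd_within[OF ab x] by simp
    qed
  qed
  have "Cm_on m a b F"
    unfolding Cm_on_def
  proof (intro conjI allI impI ballI)
    fix k assume k: "k \<le> m"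
    show "continuous_on {a..b} (hder a b k F)"
      by (rule continuous_on_eq[of _ "G k"]) (use Gc k eq[OF k] in simp_all)
  next
    fix k x assume k: "k < m" and x: "x \<in> {a..b}"
    have h: "(G k has_vector_derivative G (Suc k) x) (at x within {a..b})" using Gd k x by simp
    have e1: "\<forall>x\<in>{a..b}. hder a b k F x = G k x" using eq k by simp
    have e2: "hder a b (Suc k) F x = G (Suc k) x" using eq[of "Suc k"] k x by simp
    show "(hder a b k F has_vector_derivative hder a b (Suc k) F x) (at x within {a..b})"
      unfolding e2 by (rule has_vector_derivative_transform_within[OF h zero_less_one x]) (use e1 in simp)
  qed
  then show ?thesis using eq by blast
qed

lemma Cm_mono: "Cm_on m a b f \<Longrightarrow> k \<le> m \<Longrightarrow> Cm_on k a b f"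
  unfolding Cm_on_def by auto

lemma Cm_hder1: "Cm_on (Suc m) a b f \<Longrightarrow> Cm_on m a b (hder a b 1 f)"
proof -
  assume f: "Cm_on (Suc m) a b f"
  have e: "\<And>k. hder a b k (hder a b 1 f) = hder a b (Suc k) f" using hder_Suc' by metis
  show ?thesis using f unfolding Cm_on_def e by auto
qed

lemma Cm_deriv:
  assumes ab: "a < b" and "continuous_on {a..b} f"
    and d: "\<forall>x\<in>{a..b}. (f has_vector_derivative g x) (at x within {a..b})"
    and g: "Cm_on m a b g"
  shows "Cm_on (Suc m) a b f"
proof -
  let ?G = "\<lambda>k. if k = 0 then f else hder a b (k - 1) g"
  have "Cm_on (Suc m) a b f \<and> (\<forall>k\<le>Suc m. \<forall>x\<in>{a..b}. hder a b k f x = ?G k x)"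
  proof (rule Cm_char[OF ab])
    show "\<forall>k\<le>Suc m. continuous_on {a..b} (?G k)"
      using assms(2) g unfolding Cm_on_def by auto
    show "\<forall>k<Suc m. \<forall>x\<in>{a..b}. (?G k has_vector_derivative ?G (Suc k) x) (at x within {a..b})"
    proof (intro allI impI ballI)
      fix k x assume k: "k < Suc m" and x: "x \<in> {a..b}"
      show "(?G k has_vector_derivative ?G (Suc k) x) (at x within {a..b})"
      proof (cases k)
        case 0 then show ?thesis using d x by simp
      next
        case (Suc j) then show ?thesis using g k x unfolding Cm_on_def by simp
      qed
    qed
  qed simp
  then show ?thesis by blast
qed

lemma Cm_const:
  assumes "a < b"
  shows "Cm_on m a b (\<lambda>x. c) \<and> (\<forall>k\<le>m. \<forall>x\<in>{a..b}. hder a b k (\<lambda>x. c) x = (if k = 0 then c else 0))"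
  by (rule Cm_char[OF assms]) auto

lemma Cm_lincomb:
  fixes f :: "nat \<Rightarrow> real \<Rightarrow> 'a::real_normed_field"
  assumes ab: "a < b" and fin: "finite A" and f: "\<forall>i\<in>A. Cm_on m a b (f i)"
  shows "Cm_on m a b (\<lambda>x. \<Sum>i\<in>A. c i * f i x) \<and>
    (\<forall>k\<le>m. \<forall>x\<in>{a..b}. hder a b k (\<lambda>x. \<Sum>i\<in>A. c i * f i x) x = (\<Sum>i\<in>A. c i * hder a b k (f i) x))"
proof (rule Cm_char[OF ab])
  show "\<forall>k\<le>m. continuous_on {a..b} (\<lambda>x. \<Sum>i\<in>A. c i * hder a b k (f i) x)"
    using f unfolding Cm_on_def by (auto intro!: continuous_intros)
  show "\<forall>k<m. \<forall>x\<in>{a..b}. ((\<lambda>x. \<Sum>i\<in>A. c i * hder a b k (f i) x) has_vector_derivative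
      (\<Sum>i\<in>A. c i * hder a b (Suc k) (f i) x)) (at x within {a..b})"
    using f unfolding Cm_on_def by (auto intro!: derivative_intros)
qed simp

lemma Cm_add:
  fixes f g :: "real \<Rightarrow> 'a::real_normed_field"
  assumes ab: "a < b" and f: "Cm_on m a b f" and g: "Cm_on m a b g"
  shows "Cm_on m a b (\<lambda>x. f x + g x) \<and>
    (\<forall>k\<le>m. \<forall>x\<in>{a..b}. hder a b k (\<lambda>x. f x + g x) x = hder a b k f x + hder a b k g x)"
proof (rule Cm_char[OF ab])
  show "\<forall>k\<le>m. continuous_on {a..b} (\<lambda>x. hder a b k f x + hder a b k g x)"
    using f g unfolding Cm_on_def by (auto intro!: continuous_intros)
  show "\<forall>k<m. \<forall>x\<in>{a..b}. ((\<lambda>x. hder a b k f x + hder a b k g x) has_vector_derivative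
      (hder a b (Suc k) f x + hder a b (Suc k) g x)) (at x within {a..b})"
    using f g unfolding Cm_on_def by (auto intro!: derivative_intros)
qed simp

lemma Cm_scale:
  fixes f :: "real \<Rightarrow> 'a::real_normed_field"
  assumes ab: "a < b" and f: "Cm_on m a b f"
  shows "Cm_on m a b (\<lambda>x. c * f x) \<and>
    (\<forall>k\<le>m. \<forall>x\<in>{a..b}. hder a b k (\<lambda>x. c * f x) x = c * hder a b k f x)"
proof (rule Cm_char[OF ab])
  show "\<forall>k\<le>m. continuous_on {a..b} (\<lambda>x. c * hder a b k f x)"
    using f unfolding Cm_on_def by (auto intro!: continuous_intros)
  show "\<forall>k<m. \<forall>x\<in>{a..b}. ((\<lambda>x. c * hder a b k f x) has_vector_derivative
      (c * hder a b (Suc k) f x)) (at x within {a..b})"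
    using f unfolding Cm_on_def by (auto intro!: derivative_intros)
qed simp

lemma Cm_d1:
  assumes "Cm_on (Suc m) a b f" "x \<in> {a..b}"
  shows "(f has_vector_derivative hder a b 1 f x) (at x within {a..b})"
  using assms unfolding Cm_on_def by (metis hder.simps(1) zero_less_Suc One_nat_def)

lemma Cm_mult:
  fixes f g :: "real \<Rightarrow> 'a::real_normed_field"
  assumes ab: "a < b"
  shows "Cm_on m a b f \<Longrightarrow> Cm_on m a b g \<Longrightarrow> Cm_on m a b (\<lambda>x. f x * g x)"
proof (induction m arbitrary: f g)
  case 0
  then show ?case unfolding Cm_on_def by (auto intro!: continuous_intros)
next
  case (Suc m)
  have c1: "Cm_on m a b (\<lambda>x. f x * hder a b 1 g x)"
    by (rule Suc.IH) (use Cm_mono[OF Suc.prems(1)] Cm_hder1[OF Suc.prems(2)] in auto)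
  have c2: "Cm_on m a b (\<lambda>x. hder a b 1 f x * g x)"
    by (rule Suc.IH) (use Cm_mono[OF Suc.prems(2)] Cm_hder1[OF Suc.prems(1)] in auto)
  show ?case
  proof (rule Cm_deriv[OF ab])
    show "continuous_on {a..b} (\<lambda>x. f x * g x)"
      using Suc.prems unfolding Cm_on_def by (auto intro!: continuous_intros)
    show "\<forall>x\<in>{a..b}. ((\<lambda>x. f x * g x) has_vector_derivative
        (f x * hder a b 1 g x + hder a b 1 f x * g x)) (at x within {a..b})"
      using Cm_d1[OF Suc.prems(1)] Cm_d1[OF Suc.prems(2)] by (auto intro!: has_vector_derivative_mult)
    show "Cm_on m a b (\<lambda>x. f x * hder a b 1 g x + hder a b 1 f x * g x)"
      using Cm_add[OF ab c1 c2] by blast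
  qed
qed

lemma hder1_mult:
  fixes f g :: "real \<Rightarrow> 'a::real_normed_field"
  assumes ab: "a < b" and "Cm_on (Suc m) a b f" "Cm_on (Suc m) a b g" "x \<in> {a..b}"
  shows "hder a b 1 (\<lambda>x. f x * g x) x = hder a b 1 f x * g x + f x * hder a b 1 g x"
proof -
  have "((\<lambda>x. f x * g x) has_vector_derivative
        (f x * hder a b 1 g x + hder a b 1 f x * g x)) (at x within {a..b})"
    using Cm_d1[OF assms(2,4)] Cm_d1[OF assms(3,4)] by (auto intro!: has_vector_derivative_mult)
  then show ?thesis using vd_within[OF ab assms(4)] by (simp add: add.commute)
qed

lemma leib_zero:
  fixes f g :: "real \<Rightarrow> 'a::real_normed_field"
  assumes ab: "a < b"
  shows "Cm_on m a b f \<Longrightarrow> Cm_on m a b g \<Longrightarrow> k \<le> m \<Longrightarrow> c \<in> {a..b} \<Longrightarrow> (\<forall>j<k. hder a b j f c = 0) \<Longrightarrow>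
    (\<forall>j<k. hder a b j (\<lambda>x. f x * g x) c = 0) \<and> hder a b k (\<lambda>x. f x * g x) c = hder a b k f c * g c"
proof (induction m arbitrary: f g k)
  case 0
  then show ?case by simp
next
  case (Suc m)
  show ?case
  proof (cases k)
    case 0
    then show ?thesis by simp
  next
    case (Suc k')
    note pr = Suc.prems
    let ?F1 = "\<lambda>x. hder a b 1 f x * g x" and ?F2 = "\<lambda>x. f x * hder a b 1 g x"
    have f1: "Cm_on m a b (hder a b 1 f)" and g1: "Cm_on m a b (hder a b 1 g)"
      using Cm_hder1 pr by blast+
    have fm: "Cm_on m a b f" and gm: "Cm_on m a b g" using Cm_mono pr(1,2) by fastforce+
    have cF1: "Cm_on m a b ?F1" by (rule Cm_mult[OF ab f1 gm])
    have cF2: "Cm_on m a b ?F2" by (rule Cm_mult[OF ab fm g1])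
    have k'm: "k' \<le> m" using pr(3) Suc by simp
    have e: "\<And>j. hder a b j (hder a b 1 f) = hder a b (Suc j) f" using hder_Suc' by metis
    have h1: "\<forall>j<k'. hder a b j (hder a b 1 f) c = 0"
      unfolding e using pr(5) Suc by auto
    have I1: "(\<forall>j<k'. hder a b j ?F1 c = 0) \<and> hder a b k' ?F1 c = hder a b k' (hder a b 1 f) c * g c"
      by (rule Suc.IH[OF f1 gm k'm pr(4) h1])
    have I2: "(\<forall>j<k'. hder a b j ?F2 c = 0) \<and> hder a b k' ?F2 c = hder a b k' f c * hder a b 1 g c"
      by (rule Suc.IH[OF fm g1 k'm pr(4)]) (use pr(5) Suc in auto)
    have fk': "hder a b k' f c = 0" using pr(5) Suc by auto
    have red: "hder a b (Suc j) (\<lambda>x. f x * g x) c = hder a b j ?F1 c + hder a b j ?F2 c"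
      if "j \<le> m" for j
    proof -
      have "hder a b (Suc j) (\<lambda>x. f x * g x) c = hder a b j (hder a b 1 (\<lambda>x. f x * g x)) c"
        by (rule arg_cong[where f="\<lambda>F. F c"], rule hder_Suc')
      also have "\<dots> = hder a b j (\<lambda>x. ?F1 x + ?F2 x) c"
        by (rule hder_local[OF _ pr(4)]) (use hder1_mult[OF ab pr(1) pr(2)] in auto)
      also have "\<dots> = hder a b j ?F1 c + hder a b j ?F2 c"
        using Cm_add[OF ab cF1 cF2] that pr(4) by blast
      finally show ?thesis .
    qed
    have A: "\<forall>j<k. hder a b j (\<lambda>x. f x * g x) c = 0"
    proof (intro allI impI)
      fix j assume j: "j < k"
      show "hder a b j (\<lambda>x. f x * g x) c = 0"
      proof (cases j)
        case 0
        have "hder a b 0 f c = 0" using pr(5) j 0 by blast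
        then show ?thesis using 0 by simp
      next
        case (Suc j')
        then show ?thesis using red[of j'] I1 I2 j \<open>k = Suc k'\<close> k'm by auto
      qed
    qed
    have B: "hder a b k (\<lambda>x. f x * g x) c = hder a b k f c * g c"
      using red[OF k'm] I1 I2 fk' Suc e[of k'] by simp
    show ?thesis using A B by blast
  qed
qed

lemma Cm_inverse:
  fixes f :: "real \<Rightarrow> 'a::real_normed_field"
  assumes ab: "a < b" and f: "Cm_on n a b f" and nz: "\<forall>x\<in>{a..b}. f x \<noteq> 0"
  shows "Cm_on n a b (\<lambda>x. inverse (f x))"
proof -
  have "Cm_on k a b (\<lambda>x. inverse (f x))" if "k \<le> n" for k
    using that
  proof (induction k)
    case 0
    then show ?case using f nz unfolding Cm_on_def by (auto intro!: continuous_on_inverse)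
  next
    case (Suc k)
    obtain n' where n': "n = Suc n'" using Suc.prems by (cases n) auto
    have f1: "Cm_on k a b (hder a b 1 f)" using Cm_hder1[of n' a b f] f n' Cm_mono Suc.prems by auto
    have IH: "Cm_on k a b (\<lambda>x. inverse (f x))" using Suc by simp
    have g: "Cm_on k a b (\<lambda>x. -1 * (inverse (f x) * (hder a b 1 f x * inverse (f x))))"
      using Cm_scale[OF ab Cm_mult[OF ab IH Cm_mult[OF ab f1 IH]], of "-1"] by blast
    show ?case
    proof (rule Cm_deriv[OF ab _ _ g])
      show "continuous_on {a..b} (\<lambda>x. inverse (f x))" using IH unfolding Cm_on_def by auto
      show "\<forall>x\<in>{a..b}. ((\<lambda>x. inverse (f x)) has_vector_derivative
          -1 * (inverse (f x) * (hder a b 1 f x * inverse (f x)))) (at x within {a..b})"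
      proof
        fix x assume x: "x \<in> {a..b}"
        have d: "(f has_derivative (\<lambda>h. h *\<^sub>R hder a b 1 f x)) (at x within {a..b})"
          using Cm_d1[of n' a b f x] f n' x by (simp add: has_vector_derivative_def)
        have "((\<lambda>x. inverse (f x)) has_derivative
          (\<lambda>h. - (inverse (f x) * (h *\<^sub>R hder a b 1 f x) * inverse (f x)))) (at x within {a..b})"
          by (rule Deriv.has_derivative_inverse[OF _ d]) (use nz x in auto)
        moreover have "(\<lambda>h. - (inverse (f x) * (h *\<^sub>R hder a b 1 f x) * inverse (f x))) =
          (\<lambda>h. h *\<^sub>R (-1 * (inverse (f x) * (hder a b 1 f x * inverse (f x)))))"
          by (auto simp: fun_eq_iff mult.assoc)
        ultimately show "((\<lambda>x. inverse (f x)) has_vector_derivative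
          -1 * (inverse (f x) * (hder a b 1 f x * inverse (f x)))) (at x within {a..b})"
          by (simp add: has_vector_derivative_def)
      qed
    qed
  qed
  then show ?thesis by simp
qed

lemma Cm_divide:
  fixes f :: "real \<Rightarrow> 'a::real_normed_field"
  assumes ab: "a < b" and g: "Cm_on n a b g" and f: "Cm_on n a b f" and nz: "\<forall>x\<in>{a..b}. f x \<noteq> 0"
  shows "Cm_on n a b (\<lambda>x. g x / f x)"
  using Cm_mult[OF ab g Cm_inverse[OF ab f nz]] by (simp add: divide_inverse)

lemma poly_vd:
  "((\<lambda>t. of_real ((t - c) ^ Suc k / fact (Suc k)) :: 'a::real_normed_field) has_vector_derivative
     of_real ((t - c) ^ k / fact k)) (at t within S)"
proof -
  have "((\<lambda>t. (t - c) ^ Suc k / fact (Suc k)) has_real_derivative ((t - c) ^ k / fact k)) (at t within S)"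
  proof -
    have "((\<lambda>t. (t - c) ^ Suc k) has_real_derivative (real (Suc k) * (t - c) ^ k)) (at t within S)"
      apply (auto intro!: derivative_eq_intros)
      apply (cases k)
       apply (auto simp: algebra_simps)
      done
    from DERIV_cdivide[OF this, of "fact (Suc k)"]
    show ?thesis by (simp add: divide_simps)
  qed
  then show ?thesis by (rule has_vector_derivative_of_real)
qed

lemma taylor_o:
  fixes h :: "real \<Rightarrow> 'a::real_normed_field"
  assumes ab: "a < b"
  shows "Cm_on m a b h \<Longrightarrow> k \<le> m \<Longrightarrow> c \<in> {a..b} \<Longrightarrow> (\<forall>j<k. hder a b j h c = 0) \<Longrightarrow> \<epsilon> > 0 \<Longrightarrow>
    \<exists>\<delta>>0. \<forall>x\<in>{a..b}. \<bar>x - c\<bar> < \<delta> \<longrightarrow>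
       norm (h x - of_real ((x - c)^k / fact k) * hder a b k h c) \<le> \<epsilon> * \<bar>x - c\<bar>^k"
proof (induction k arbitrary: h m)
  case 0
  then have "continuous_on {a..b} h" unfolding Cm_on_def by (metis hder.simps(1) le0)
  then obtain \<delta> where d: "\<delta> > 0" "\<forall>x'\<in>{a..b}. dist x' c < \<delta> \<longrightarrow> dist (h x') (h c) < \<epsilon>"
    using 0 unfolding continuous_on_iff by blast
  show ?case
    by (rule exI[of _ \<delta>]) (use d in \<open>auto simp: dist_norm intro: less_imp_le\<close>)
next
  case (Suc k)
  obtain m' where m': "m = Suc m'" using Suc.prems(2) by (cases m) auto
  have hm: "Cm_on (Suc m') a b h" using Suc.prems(1) m' by simp
  have h1: "Cm_on m' a b (hder a b 1 h)" by (rule Cm_hder1[OF hm])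
  have e: "\<And>j. hder a b j (hder a b 1 h) = hder a b (Suc j) h" using hder_Suc' by metis
  have z: "\<forall>j<k. hder a b j (hder a b 1 h) c = 0" unfolding e using Suc.prems(4) by auto
  obtain \<delta> where d: "\<delta> > 0" and dB: "\<forall>x\<in>{a..b}. \<bar>x - c\<bar> < \<delta> \<longrightarrow>
       norm (hder a b 1 h x - of_real ((x - c)^k / fact k) * hder a b (Suc k) h c) \<le> \<epsilon> * \<bar>x - c\<bar>^k"
    using Suc.IH[OF h1 _ Suc.prems(3) z Suc.prems(5)] Suc.prems(2) m' unfolding e by auto
  define D where "D = hder a b (Suc k) h c"
  define \<phi> where "\<phi> t = h t - of_real ((t - c)^Suc k / fact (Suc k)) * D" for t
  define \<phi>' where "\<phi>' t = hder a b 1 h t - of_real ((t - c)^k / fact k) * D" for t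
  have dphi: "(\<phi> has_vector_derivative \<phi>' t) (at t within {a..b})" if t: "t \<in> {a..b}" for t
    unfolding \<phi>_def \<phi>'_def
    by (intro has_vector_derivative_diff Cm_d1[OF hm t] has_vector_derivative_mult_left poly_vd)
  have h0: "h c = 0" using Suc.prems(4) by (metis hder.simps(1) zero_less_Suc)
  show ?case
  proof (rule exI[of _ \<delta>], intro conjI d ballI impI)
    fix x assume x: "x \<in> {a..b}" and xd: "\<bar>x - c\<bar> < \<delta>"
    let ?S = "closed_segment c x"
    have S: "?S \<subseteq> {a..b}" using closed_segment_subset[OF Suc.prems(3) x] by simp
    have "norm (\<phi> x - \<phi> c) \<le> (\<epsilon> * \<bar>x - c\<bar>^k) * norm (x - c)"
    proof (rule differentiable_bound[where f'="\<lambda>t u. u *\<^sub>R \<phi>' t"])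
      show "convex ?S" by simp
      show "x \<in> ?S" "c \<in> ?S" by auto
      fix t assume t: "t \<in> ?S"
      show "(\<phi> has_derivative (\<lambda>u. u *\<^sub>R \<phi>' t)) (at t within ?S)"
        using has_vector_derivative_within_subset[OF dphi[of t] S] t S
        by (auto simp: has_vector_derivative_def)
      have tc: "\<bar>t - c\<bar> \<le> \<bar>x - c\<bar>" using dist_in_closed_segment[OF t] by (simp add: dist_real_def abs_minus_commute)
      have "onorm (\<lambda>u. u *\<^sub>R \<phi>' t) = norm (\<phi>' t)"
        using onorm_scaleR_left[OF bounded_linear_ident, of "\<phi>' t"] by (simp add: onorm_id)
      also have "\<dots> \<le> \<epsilon> * \<bar>t - c\<bar>^k" using dB t S tc xd unfolding \<phi>'_def D_def by auto
      also have "\<dots> \<le> \<epsilon> * \<bar>x - c\<bar>^k"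
        using tc Suc.prems(5) by (intro mult_left_mono power_mono) auto
      finally show "onorm (\<lambda>u. u *\<^sub>R \<phi>' t) \<le> \<epsilon> * \<bar>x - c\<bar>^k" .
    qed
    also have "\<dots> = \<epsilon> * \<bar>x - c\<bar>^Suc k" by (simp add: mult_ac)
    finally show "norm (h x - of_real ((x - c)^Suc k / fact (Suc k)) * hder a b (Suc k) h c) \<le> \<epsilon> * \<bar>x - c\<bar>^Suc k"
      using h0 unfolding \<phi>_def D_def by simp
  qed
qed

lemma sign_at:
  fixes h :: "real \<Rightarrow> 'a::real_normed_field"
  assumes ab: "a < b" and hC: "Cm_on m a b h" and km: "k \<le> m" and zo: "zero_order a b h c k"
    and cs: "(c = a \<and> \<sigma> = 1) \<or> (c = b \<and> \<sigma> = -1)"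
    and nn: "\<exists>d>0. \<forall>x\<in>{a..b}. \<bar>x - c\<bar> < d \<longrightarrow> (\<exists>r\<ge>0. h x = of_real r)"
  shows "\<exists>r>0. hder a b k h c = of_real (\<sigma>^k * r)"
proof -
  define D where "D = hder a b k h c"
  define s where "s = \<sigma>^k"
  have Dnz: "D \<noteq> 0" using zo unfolding zero_order_def D_def by simp
  have z: "\<forall>j<k. hder a b j h c = 0" using zo unfolding zero_order_def by simp
  have c: "c \<in> {a..b}" using cs ab by auto
  have ss: "s * s = 1" and as: "\<bar>s\<bar> = 1" using cs unfolding s_def
    by (auto simp: power_mult_distrib[symmetric] power_abs)
  obtain d where d: "d > 0" "\<forall>x\<in>{a..b}. \<bar>x - c\<bar> < d \<longrightarrow> (\<exists>r\<ge>0. h x = of_real r)"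
    using nn by blast
  define T where "T = (of_real (s * norm D) :: 'a)"
  have small: "norm (D - T) \<le> \<epsilon>" if e: "\<epsilon> > 0" for \<epsilon>
  proof -
    define \<epsilon>' where "\<epsilon>' = \<epsilon> / (2 * fact k)"
    have e': "\<epsilon>' > 0" using e by (simp add: \<epsilon>'_def)
    obtain \<delta> where dl: "\<delta> > 0" and B: "\<forall>x\<in>{a..b}. \<bar>x - c\<bar> < \<delta> \<longrightarrow>
       norm (h x - of_real ((x - c)^k / fact k) * D) \<le> \<epsilon>' * \<bar>x - c\<bar>^k"
      using taylor_o[OF ab hC km c z e'] unfolding D_def by blast
    define t where "t = min (min \<delta> d) (b - a) / 2"
    have t: "t > 0" "t < \<delta>" "t < d" "t \<le> (b - a) / 2" using dl d ab by (auto simp: t_def)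
    define x where "x = c + \<sigma> * t"
    have x: "x \<in> {a..b}" "x - c = \<sigma> * t" "\<bar>x - c\<bar> = t" using cs t by (auto simp: x_def)
    obtain r where r: "r \<ge> 0" "h x = of_real r" using d(2) x(1) x(3) t(3) by blast
    define y where "y = (x - c)^k / fact k"
    have y: "y = s * t^k / fact k" unfolding y_def x(2) s_def by (simp add: power_mult_distrib)
    have ynz: "y \<noteq> 0" using y ss t(1) by auto
    have "norm (h x - of_real ((x - c)^k / fact k) * D) \<le> \<epsilon>' * \<bar>x - c\<bar>^k"
      using B x(1) x(3) t(2) by blast
    then have Bx: "norm (h x - of_real y * D) \<le> \<epsilon>' * t^k" unfolding y_def x(3) .
    define \<rho> where "\<rho> = r * fact k / t^k"
    have rho: "\<rho> \<ge> 0" using r t by (simp add: \<rho>_def)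
    define u where "u = (of_real (s * \<rho>) :: 'a)"
    have snz: "s \<noteq> 0" using ss by auto
    have s1: "1 / s = s" using ss snz by (simp add: field_simps)
    have "(1 / y) * r = (1 / s) * (r * fact k / t^k)" unfolding y using snz t(1) by (simp add: field_simps)
    then have "s * \<rho> = (1 / y) * r" unfolding s1 \<rho>_def by simp
    then have u1: "u = of_real (1 / y) * h x"
      unfolding u_def r(2) of_real_mult[symmetric] by simp
    have "norm (u - D) = norm (of_real (1 / y) * (h x - of_real y * D))"
      unfolding u1 using ynz by (simp add: algebra_simps of_real_mult[symmetric] del: of_real_mult)
    also have "\<dots> = \<bar>1 / y\<bar> * norm (h x - of_real y * D)" by (simp only: norm_mult norm_of_real)
    also have "\<dots> \<le> \<bar>1 / y\<bar> * (\<epsilon>' * t^k)" by (rule mult_left_mono[OF Bx]) simp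
    also have "\<dots> = \<epsilon> / 2" using as t(1) unfolding y \<epsilon>'_def by (simp add: abs_mult)
    finally have uD: "norm (u - D) \<le> \<epsilon> / 2" .
    have nu: "norm u = \<rho>" unfolding u_def norm_of_real using as rho by (simp add: abs_mult)
    have "norm (u - T) = \<bar>\<rho> - norm D\<bar>"
      unfolding u_def T_def of_real_diff[symmetric] norm_of_real
      by (simp add: right_diff_distrib[symmetric] abs_mult as)
    also have "\<dots> \<le> norm (u - D)" using norm_triangle_ineq3[of u D] nu by simp
    finally have uT: "norm (u - T) \<le> \<epsilon> / 2" using uD by simp
    have "norm (D - T) \<le> norm (D - u) + norm (u - T)" by (rule norm_diff_triangle_ineq[of D u u T, simplified])
    also have "\<dots> \<le> \<epsilon>" using uD uT by (simp add: norm_minus_commute)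
    finally show ?thesis .
  qed
  have "norm (D - T) = 0"
  proof (rule ccontr)
    assume "norm (D - T) \<noteq> 0"
    then have p: "norm (D - T) > 0" by simp
    from small[of "norm (D - T) / 2"] p show False by simp
  qed
  then have "D = T" by simp
  then have "hder a b k h c = of_real (\<sigma>^k * norm D)" unfolding T_def s_def D_def[symmetric] .
  moreover have "norm D > 0" using Dnz by simp
  ultimately show ?thesis by blast
qed

lemma hder_zero:
  assumes "a < b" "x \<in> {a..b}"
  shows "hder a b k (\<lambda>x. 0::'a::real_normed_field) x = 0"
  using Cm_const[OF assms(1), of k "0::'a"] assms(2) by auto

lemma lowest:
  fixes v :: "nat \<Rightarrow> real \<Rightarrow> 'a::real_normed_field" and C :: "nat \<Rightarrow> 'a"
  assumes ab: "a < b" and vC: "\<forall>j\<le>M. Cm_on M a b (v j)" and oi: "inj_on od {..M}"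
    and zo: "\<forall>j\<le>M. zero_order a b (v j) c (od j)" and c: "c \<in> {a..b}" and tM: "t \<le> Suc M"
    and hz: "\<forall>i<t. hder a b i (\<lambda>x. \<Sum>j\<le>M. C j * v j x) c = 0"
  shows "\<forall>j\<le>M. od j < t \<longrightarrow> C j = 0"
proof -
  have "\<forall>j\<le>M. od j = i \<longrightarrow> i < t \<longrightarrow> C j = 0" for i
  proof (induction i rule: less_induct)
    case (less i)
    show ?case
    proof (intro allI impI)
      fix j assume j: "j \<le> M" "od j = i" "i < t"
      have iM: "i \<le> M" using j tM by simp
      have "0 = hder a b i (\<lambda>x. \<Sum>j\<le>M. C j * v j x) c" using hz j by simp
      also have "\<dots> = (\<Sum>l\<le>M. C l * hder a b i (v l) c)"
        using Cm_lincomb[OF ab finite_atMost, where f=v and c=C and m=M] vC iM c by auto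
      also have "\<dots> = (\<Sum>l\<in>{j}. C l * hder a b i (v l) c)"
      proof (rule sum.mono_neutral_right)
        show "\<forall>l\<in>{..M} - {j}. C l * hder a b i (v l) c = 0"
        proof
          fix l assume l: "l \<in> {..M} - {j}"
          have "od l \<noteq> i" using oi l j inj_onD[of od "{..M}" l j] by auto
          show "C l * hder a b i (v l) c = 0"
          proof (cases "od l < i")
            case True then show ?thesis using less.IH[of "od l"] l j by auto
          next
            case False
            then have "i < od l" using \<open>od l \<noteq> i\<close> by simp
            then show ?thesis using zo l unfolding zero_order_def by auto
          qed
        qed
      qed (use j in auto)
      finally have "C j * hder a b i (v j) c = 0" by simp
      moreover have "hder a b i (v j) c \<noteq> 0" using zo j unfolding zero_order_def by auto
      ultimately show "C j = 0" by simp
    qed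
  qed
  then show ?thesis by blast
qed

lemma quot_zero:
  fixes p f0 :: "real \<Rightarrow> 'a::real_normed_field"
  assumes ab: "a < b" and pC: "Cm_on n a b p" and fC: "Cm_on n a b f0"
    and nz: "\<forall>x\<in>{a..b}. f0 x \<noteq> 0" and kn: "k \<le> n" and c: "c \<in> {a..b}"
    and zo: "zero_order a b p c k"
  shows "(\<forall>j<k. hder a b j (\<lambda>x. p x / f0 x) c = 0) \<and>
    hder a b k (\<lambda>x. p x / f0 x) c = hder a b k p c / f0 c"
proof -
  define R where "R = (\<lambda>x. p x / f0 x)"
  have RC: "Cm_on n a b R" unfolding R_def by (rule Cm_divide[OF ab pC fC nz])
  have pr: "hder a b j (\<lambda>x. R x * f0 x) c = hder a b j p c" for j
    by (rule hder_local[OF _ c]) (use nz in \<open>auto simp: R_def\<close>)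
  have z: "\<forall>i<j. hder a b i R c = 0" if "j \<le> k" for j
    using that
  proof (induction j)
    case 0 then show ?case by simp
  next
    case (Suc j)
    have IH: "\<forall>i<j. hder a b i R c = 0" using Suc by simp
    have "hder a b j (\<lambda>x. R x * f0 x) c = hder a b j R c * f0 c"
      using leib_zero[OF ab RC fC _ c IH] Suc.prems kn by simp
    moreover have "hder a b j p c = 0" using zo Suc.prems unfolding zero_order_def by simp
    ultimately have "hder a b j R c = 0" using pr[of j] nz c by simp
    then show ?case using IH less_Suc_eq by auto
  qed
  have "hder a b k (\<lambda>x. R x * f0 x) c = hder a b k R c * f0 c"
    using leib_zero[OF ab RC fC kn c z[OF order.refl]] by simp
  then have "hder a b k R c = hder a b k p c / f0 c" using pr[of k] nz c by (simp add: field_simps)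
  then show ?thesis using z[OF order.refl] unfolding R_def by simp
qed

lemma sum_collapse:
  assumes "finite A" "j0 \<in> A" "\<And>j. j \<in> A \<Longrightarrow> j \<noteq> j0 \<Longrightarrow> f j = 0"
  shows "sum f A = f j0"
proof -
  have "sum f A = sum f {j0}"
    using assms by (intro sum.mono_neutral_right) auto
  then show ?thesis by simp
qed

lemma sum_collapse2:
  assumes "finite A" "j0 \<in> A" "j1 \<in> A" "j0 \<noteq> j1" "\<And>j. j \<in> A \<Longrightarrow> j \<noteq> j0 \<Longrightarrow> j \<noteq> j1 \<Longrightarrow> f j = 0"
  shows "sum f A = f j0 + f j1"
proof -
  have "sum f A = sum f {j0, j1}"
    using assms by (intro sum.mono_neutral_right) auto
  then show ?thesis using assms(4) by simp
qed

lemma nn_a: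
  assumes "loc_nonneg m a b p" "k \<le> m"
  shows "\<exists>d>0. \<forall>x\<in>{a..b}. \<bar>x - a\<bar> < d \<longrightarrow> (\<exists>r\<ge>0. p k x = of_real r)"
proof -
  obtain \<delta> where d: "\<delta> > 0" "\<forall>k\<le>m. \<forall>x\<in>{a..b}. (x < a + \<delta> \<or> b - \<delta> < x) \<longrightarrow> (\<exists>r\<ge>0. p k x = of_real r)"
    using assms(1) unfolding loc_nonneg_def by blast
  show ?thesis
    by (rule exI[of _ \<delta>]) (use d assms(2) in auto)
qed

lemma nn_b:
  assumes "loc_nonneg m a b p" "k \<le> m"
  shows "\<exists>d>0. \<forall>x\<in>{a..b}. \<bar>x - b\<bar> < d \<longrightarrow> (\<exists>r\<ge>0. p k x = of_real r)"
proof -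
  obtain \<delta> where d: "\<delta> > 0" "\<forall>k\<le>m. \<forall>x\<in>{a..b}. (x < a + \<delta> \<or> b - \<delta> < x) \<longrightarrow> (\<exists>r\<ge>0. p k x = of_real r)"
    using assms(1) unfolding loc_nonneg_def by blast
  show ?thesis
    by (rule exI[of _ \<delta>]) (use d assms(2) in auto)
qed

lemma solve_of_real:
  assumes "X * of_real r = (of_real t :: 'a::real_normed_field)" "r \<noteq> 0"
  shows "X = of_real (t / r)"
proof -
  have "X = X * of_real r / of_real r" using assms(2) by simp
  also have "\<dots> = of_real (t / r)" using assms(1) by (simp add: of_real_divide)
  finally show ?thesis .
qed

theorem theorem7:
  fixes a b :: real and n :: nat
    and U :: "(real \<Rightarrow> 'a::real_normed_field) set"
    and p q :: "nat \<Rightarrow> real \<Rightarrow> 'a" and f0 :: "real \<Rightarrow> 'a" and \<beta> :: "nat \<Rightarrow> 'a"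
  assumes "a < b" and "1 \<le> n"
    and "Cm_subspace_dim n a b U"
    and "bernstein_basis n a b U p" and "loc_nonneg n a b p"
    and "f0 \<in> U" and "\<forall>x\<in>{a..b}. \<exists>r>0. f0 x = of_real r"
    and "bernstein_basis (n - 1) a b (Dquot a b f0 U) q" and "loc_nonneg (n - 1) a b q"
    and "\<forall>x\<in>{a..b}. f0 x = (\<Sum>k\<le>n. \<beta> k * p k x)"
  shows "\<forall>k\<le>n. \<exists>r>0. \<beta> k = of_real r"
proof -
  note ab = assms(1)
  obtain n' where n': "n = Suc n'" using assms(2) by (cases n) auto
  have nm1: "n - 1 = n'" using n' by simp
  have UC: "\<forall>f\<in>U. Cm_on n a b f" using assms(3) unfolding Cm_subspace_dim_def by blast
  obtain e where eU: "\<forall>k\<le>n. e k \<in> U"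
    and eind: "\<forall>c. (\<forall>x\<in>{a..b}. (\<Sum>k\<le>n. c k * e k x) = 0) \<longrightarrow> (\<forall>k\<le>n. c k = 0)"
    and espan: "\<forall>f\<in>U. \<exists>c. \<forall>x\<in>{a..b}. f x = (\<Sum>k\<le>n. c k * e k x)"
    using assms(3) unfolding Cm_subspace_dim_def by blast
  have f0C: "Cm_on n a b f0" using UC assms(6) by blast
  obtain rf where rf: "\<forall>x\<in>{a..b}. rf x > 0 \<and> f0 x = of_real (rf x)"
    using assms(7) by metis
  have f0nz: "\<forall>x\<in>{a..b}. f0 x \<noteq> 0" using rf by fastforce
  have aI: "a \<in> {a..b}" and bI: "b \<in> {a..b}" using ab by auto
  have pU: "\<forall>k\<le>n. p k \<in> U" and pza: "\<forall>k\<le>n. zero_order a b (p k) a k"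
    and pzb: "\<forall>k\<le>n. zero_order a b (p k) b (n - k)"
    using assms(4) unfolding bernstein_basis_def by auto
  have pC: "\<forall>k\<le>n. Cm_on n a b (p k)" using pU UC by blast
  have qD: "\<forall>j\<le>n'. q j \<in> Dquot a b f0 U" and qza: "\<forall>j\<le>n'. zero_order a b (q j) a j"
    and qzb: "\<forall>j\<le>n'. zero_order a b (q j) b (n' - j)"
    using assms(8) unfolding bernstein_basis_def nm1 by auto
  have "\<forall>j. \<exists>Hj. j \<le> n' \<longrightarrow> Hj \<in> U \<and> q j = hder a b 1 (\<lambda>x. Hj x / f0 x)"
    using qD unfolding Dquot_def by blast
  then obtain H where HU: "\<forall>j\<le>n'. H j \<in> U" and Hq: "\<forall>j\<le>n'. q j = hder a b 1 (\<lambda>x. H j x / f0 x)"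
    by metis
  have qC: "\<forall>j\<le>n'. Cm_on n' a b (q j)"
  proof (intro allI impI)
    fix j assume j: "j \<le> n'"
    have "Cm_on (Suc n') a b (\<lambda>x. H j x / f0 x)"
      using Cm_divide[OF ab _ f0C f0nz, of "H j"] HU UC j n' by auto
    then show "Cm_on n' a b (q j)" using Hq j Cm_hder1 by metis
  qed
  have qind: "\<forall>j\<le>n'. C j = 0" if C: "\<forall>x\<in>{a..b}. (\<Sum>j\<le>n'. C j * q j x) = 0" for C
  proof -
    have hz: "\<forall>i<Suc n'. hder a b i (\<lambda>x. \<Sum>j\<le>n'. C j * q j x) a = 0"
    proof (intro allI impI)
      fix i
      have "hder a b i (\<lambda>x. \<Sum>j\<le>n'. C j * q j x) a = hder a b i (\<lambda>x. 0) a"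
        by (rule hder_local[OF _ aI]) (use C in auto)
      then show "hder a b i (\<lambda>x. \<Sum>j\<le>n'. C j * q j x) a = 0" using hder_zero[OF ab aI] by simp
    qed
    have "\<forall>j\<le>n'. id j < Suc n' \<longrightarrow> C j = 0"
      by (rule lowest[OF ab qC _ _ aI order.refl hz]) (use qza in auto)
    then show ?thesis by auto
  qed
  define w where "w j = (if j < n then H j else f0)" for j
  have wU: "\<forall>j\<le>n. w j \<in> U" using HU assms(6) n' by (auto simp: w_def)
  define u where "u j = (\<lambda>x. w j x / f0 x)" for j
  have uC: "\<forall>j\<le>n. Cm_on n a b (u j)"
    using Cm_divide[OF ab _ f0C f0nz] wU UC unfolding u_def by blast
  have du: "hder a b 1 (u j) x = (if j < n then q j x else 0)" if "j \<le> n" "x \<in> {a..b}" for j x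
  proof (cases "j < n")
    case True
    then show ?thesis using Hq n' by (auto simp: u_def w_def)
  next
    case False
    have "hder a b 1 (u j) x = hder a b 1 (\<lambda>x. 1) x"
      by (rule hder_local[OF _ that(2)]) (use False f0nz in \<open>auto simp: u_def w_def\<close>)
    also have "\<dots> = 0" using Cm_const[OF ab, of 1 "1::'a"] that(2) by auto
    finally show ?thesis using False by simp
  qed
  have dsum: "hder a b 1 (\<lambda>x. \<Sum>j\<le>n. C j * u j x) x = (\<Sum>j\<le>n'. C j * q j x)"
    if x: "x \<in> {a..b}" for C x
  proof -
    have "hder a b 1 (\<lambda>x. \<Sum>j\<le>n. C j * u j x) x = (\<Sum>j\<le>n. C j * hder a b 1 (u j) x)"
      using Cm_lincomb[OF ab finite_atMost[of n], where f=u and c=C and m=n, THEN conjunct2, rule_format, of 1 x] uC x assms(2) by simp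
    also have "\<dots> = (\<Sum>j\<le>n. C j * (if j < n then q j x else 0))"
      using du x by (intro sum.cong) auto
    also have "\<dots> = (\<Sum>j\<le>n'. C j * q j x)"
      unfolding n' by (simp add: atMost_Suc)
    finally show ?thesis .
  qed
  have wind: "\<forall>j\<le>n. C j = 0" if C: "\<forall>x\<in>{a..b}. (\<Sum>j\<le>n. C j * w j x) = 0" for C
  proof -
    have "\<forall>x\<in>{a..b}. (\<Sum>j\<le>n'. C j * q j x) = 0"
    proof
      fix x assume x: "x \<in> {a..b}"
      have "hder a b 1 (\<lambda>x. \<Sum>j\<le>n. C j * u j x) x = hder a b 1 (\<lambda>x. 0) x"
      proof (rule hder_local[OF _ x], intro ballI)
        fix y assume y: "y \<in> {a..b}"
        have "(\<Sum>j\<le>n. C j * u j y) = (\<Sum>j\<le>n. C j * w j y) / f0 y"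
          by (simp add: u_def sum_divide_distrib)
        then show "(\<Sum>j\<le>n. C j * u j y) = 0" using C y by simp
      qed
      then show "(\<Sum>j\<le>n'. C j * q j x) = 0" using dsum[OF x] hder_zero[OF ab x, of 1] by simp
    qed
    then have c1: "\<forall>j\<le>n'. C j = 0" by (rule qind)
    have "(\<Sum>j\<le>n. C j * w j a) = C n * f0 a"
      using c1 n' by (simp add: atMost_Suc w_def)
    then have "C n = 0" using C aI f0nz by auto
    then show ?thesis using c1 n' le_Suc_eq by auto
  qed
  have eins: "\<forall>k\<le>n. \<exists>c. \<forall>x\<in>{a..b}. e k x = (\<Sum>j\<le>n. c j * w j x)"
  proof (intro allI impI)
    fix k assume k: "k \<le> n"
    show "\<exists>c. \<forall>x\<in>{a..b}. e k x = (\<Sum>j\<le>n. c j * w j x)"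
    proof (rule span_swap[where m=n and S="{a..b}"])
      show "\<forall>k\<le>n. c k = 0" if "\<forall>x\<in>{a..b}. (\<Sum>k\<le>n. c k * e k x) = 0" for c
        using eind that by blast
      show "\<forall>k\<le>n. c k = 0" if "\<forall>x\<in>{a..b}. (\<Sum>k\<le>n. c k * w k x) = 0" for c
        using wind that by blast
      show "\<exists>c. \<forall>x\<in>{a..b}. w j x = (\<Sum>k\<le>n. c k * e k x)" if "j \<le> n" for j
        using espan wU that by blast
    qed (rule k)
  qed
  then obtain d where d: "\<forall>k\<le>n. \<forall>x\<in>{a..b}. e k x = (\<Sum>j\<le>n. d k j * w j x)"
    by metis
  have "\<forall>k\<le>n. \<exists>Ck. \<forall>x\<in>{a..b}. p k x = (\<Sum>j\<le>n. Ck j * w j x)"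
  proof (intro allI impI)
    fix k assume k: "k \<le> n"
    obtain c where c: "\<forall>x\<in>{a..b}. p k x = (\<Sum>l\<le>n. c l * e l x)" using espan pU k by blast
    have "\<forall>x\<in>{a..b}. p k x = (\<Sum>j\<le>n. (\<Sum>l\<le>n. c l * d l j) * w j x)"
    proof
      fix x assume x: "x \<in> {a..b}"
      have "p k x = (\<Sum>l\<le>n. c l * (\<Sum>j\<le>n. d l j * w j x))" using c d x by simp
      also have "\<dots> = (\<Sum>l\<le>n. \<Sum>j\<le>n. c l * d l j * w j x)"
        by (simp add: sum_distrib_left mult.assoc)
      also have "\<dots> = (\<Sum>j\<le>n. \<Sum>l\<le>n. c l * d l j * w j x)" by (rule sum.swap)
      also have "\<dots> = (\<Sum>j\<le>n. (\<Sum>l\<le>n. c l * d l j) * w j x)"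
        by (simp add: sum_distrib_right)
      finally show "p k x = (\<Sum>j\<le>n. (\<Sum>l\<le>n. c l * d l j) * w j x)" .
    qed
    then show "\<exists>Ck. \<forall>x\<in>{a..b}. p k x = (\<Sum>j\<le>n. Ck j * w j x)"
      by (rule exI[where x="\<lambda>j. \<Sum>l\<le>n. c l * d l j"])
  qed
  then obtain Cc where Cc: "\<forall>k\<le>n. \<forall>x\<in>{a..b}. p k x = (\<Sum>j\<le>n. Cc k j * w j x)"
    by metis
  define R where "R k = (\<lambda>x. p k x / f0 x)" for k
  define G where "G k = (\<lambda>x. \<Sum>j\<le>n'. Cc k j * q j x)" for k
  have RC: "\<forall>k\<le>n. Cm_on n a b (R k)"
    using Cm_divide[OF ab _ f0C f0nz] pC unfolding R_def by blast
  have GR: "hder a b 1 (R k) x = G k x" if k: "k \<le> n" and x: "x \<in> {a..b}" for k x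
  proof -
    have "hder a b 1 (R k) x = hder a b 1 (\<lambda>x. \<Sum>j\<le>n. Cc k j * u j x) x"
    proof (rule hder_local[OF _ x], intro ballI)
      fix y assume y: "y \<in> {a..b}"
      show "R k y = (\<Sum>j\<le>n. Cc k j * u j y)"
        using Cc k y by (simp add: R_def u_def sum_divide_distrib)
    qed
    also have "\<dots> = G k x" using dsum[OF x] by (simp add: G_def)
    finally show ?thesis .
  qed
  have GRi: "hder a b i (G k) c = hder a b (Suc i) (R k) c" if "k \<le> n" "c \<in> {a..b}" for i k c
  proof -
    have "hder a b (Suc i) (R k) c = hder a b i (hder a b 1 (R k)) c" by (simp only: hder_Suc')
    also have "\<dots> = hder a b i (G k) c"
      by (rule hder_local[OF _ that(2)]) (use GR that(1) in auto)
    finally show ?thesis by simp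
  qed
  have Gh: "hder a b i (G k) c = (\<Sum>j\<le>n'. Cc k j * hder a b i (q j) c)" if "i \<le> n'" "c \<in> {a..b}" for i k c
    using Cm_lincomb[OF ab finite_atMost[of n'], where f=q and c="Cc k" and m=n', THEN conjunct2, rule_format, of i c] qC that
    unfolding G_def by auto
  have RzA: "(\<forall>j<k. hder a b j (R k) a = 0) \<and> hder a b k (R k) a = hder a b k (p k) a / f0 a"
    if "k \<le> n" for k
    unfolding R_def by (rule quot_zero[OF ab _ f0C f0nz that aI]) (use pC pza that in auto)
  have RzB: "(\<forall>j<n - k. hder a b j (R k) b = 0) \<and> hder a b (n - k) (R k) b = hder a b (n - k) (p k) b / f0 b"
    if "k \<le> n" for k
    unfolding R_def by (rule quot_zero[OF ab _ f0C f0nz _ bI]) (use pC pzb that in auto)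
  have CA: "Cc k j = 0" if "k \<le> n" "j \<le> n'" "Suc j < k" for k j
  proof -
    have hz: "\<forall>i<k - 1. hder a b i (\<lambda>x. \<Sum>j\<le>n'. Cc k j * q j x) a = 0"
    proof (intro allI impI)
      fix i assume i: "i < k - 1"
      have "hder a b i (G k) a = hder a b (Suc i) (R k) a" by (rule GRi[OF that(1) aI])
      also have "\<dots> = 0"
      proof -
        have "Suc i < k" using i by simp
        then show ?thesis using RzA[OF that(1)] by blast
      qed
      finally show "hder a b i (\<lambda>x. \<Sum>j\<le>n'. Cc k j * q j x) a = 0" by (simp add: G_def)
    qed
    have "\<forall>j\<le>n'. id j < k - 1 \<longrightarrow> Cc k j = 0"
      by (rule lowest[OF ab qC _ _ aI _ hz]) (use qza that n' in auto)
    then show ?thesis using that by auto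
  qed
  have CB: "Cc k j = 0" if "k \<le> n" "j \<le> n'" "k < j" for k j
  proof -
    have hz: "\<forall>i<n' - k. hder a b i (\<lambda>x. \<Sum>j\<le>n'. Cc k j * q j x) b = 0"
    proof (intro allI impI)
      fix i assume i: "i < n' - k"
      have "hder a b i (G k) b = hder a b (Suc i) (R k) b" by (rule GRi[OF that(1) bI])
      also have "\<dots> = 0"
      proof -
        have "Suc i < n - k" using i n' by simp
        then show ?thesis using RzB[OF that(1)] by blast
      qed
      finally show "hder a b i (\<lambda>x. \<Sum>j\<le>n'. Cc k j * q j x) b = 0" by (simp add: G_def)
    qed
    have inj: "inj_on (\<lambda>j. n' - j) {..n'}" by (auto simp: inj_on_def)
    have "\<forall>j\<le>n'. n' - j < n' - k \<longrightarrow> Cc k j = 0"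
      by (rule lowest[OF ab qC inj _ bI _ hz]) (use qzb that n' in auto)
    then show ?thesis using that by auto
  qed
  have qsa: "\<exists>r>0. hder a b j (q j) a = of_real r" if "j \<le> n'" for j
  proof -
    have "\<exists>r>0. hder a b j (q j) a = of_real (1^j * r)"
      by (rule sign_at[OF ab, where m=n']) (use qC qza that nn_a[OF assms(9), of j] nm1 in auto)
    then show ?thesis by simp
  qed
  have qsb: "\<exists>r>0. hder a b (n' - j) (q j) b = of_real ((-1)^(n' - j) * r)" if "j \<le> n'" for j
    by (rule sign_at[OF ab, where m=n']) (use qC qzb that nn_b[OF assms(9), of j] nm1 in auto)
  have psa: "\<exists>r>0. hder a b k (p k) a = of_real r" if "k \<le> n" for k
  proof -
    have "\<exists>r>0. hder a b k (p k) a = of_real (1^k * r)"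
      by (rule sign_at[OF ab, where m=n]) (use pC pza that nn_a[OF assms(5), of k] in auto)
    then show ?thesis by simp
  qed
  have psb: "\<exists>r>0. hder a b (n - k) (p k) b = of_real ((-1)^(n - k) * r)" if "k \<le> n" for k
    by (rule sign_at[OF ab, where m=n]) (use pC pzb that nn_b[OF assms(5), of k] in auto)
  have CL: "\<exists>r>0. Cc k (k - 1) = of_real r" if k: "1 \<le> k" "k \<le> n" for k
  proof -
    have km: "k - 1 \<le> n'" using k n' by simp
    have "hder a b (k - 1) (G k) a = hder a b k (R k) a" using GRi[OF k(2) aI, of "k - 1"] k by simp
    also have "\<dots> = hder a b k (p k) a / f0 a" using RzA[OF k(2)] by blast
    finally have e1: "hder a b (k - 1) (G k) a = hder a b k (p k) a / f0 a" .
    have "hder a b (k - 1) (G k) a = (\<Sum>j\<le>n'. Cc k j * hder a b (k - 1) (q j) a)" by (rule Gh[OF km aI])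
    also have "\<dots> = Cc k (k - 1) * hder a b (k - 1) (q (k - 1)) a"
    proof (rule sum_collapse)
      fix j assume j: "j \<in> {..n'}" "j \<noteq> k - 1"
      show "Cc k j * hder a b (k - 1) (q j) a = 0"
      proof (cases "j < k - 1")
        case True then show ?thesis using CA[OF k(2), of j] j by auto
      next
        case False
        then have "k - 1 < j" using j by simp
        then show ?thesis using qza j unfolding zero_order_def by auto
      qed
    qed (use km in auto)
    finally have e2: "hder a b (k - 1) (G k) a = Cc k (k - 1) * hder a b (k - 1) (q (k - 1)) a" .
    obtain r1 where r1: "r1 > 0" "hder a b k (p k) a = of_real r1" using psa[OF k(2)] by blast
    obtain r3 where r3: "r3 > 0" "hder a b (k - 1) (q (k - 1)) a = of_real r3" using qsa[OF km] by blast
    have r2: "rf a > 0" "f0 a = of_real (rf a)" using rf aI by auto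
    have "Cc k (k - 1) * of_real r3 = of_real r1 / of_real (rf a)" using e1 e2 r1 r2 r3 by simp
    then have "Cc k (k - 1) * of_real r3 = of_real (r1 / rf a)" by (simp add: of_real_divide)
    then have "Cc k (k - 1) = of_real (r1 / rf a / r3)" by (rule solve_of_real) (use r3(1) in simp)
    moreover have "r1 / rf a / r3 > 0" using r1 r2 r3 by simp
    ultimately show ?thesis by blast
  qed
  have CD: "\<exists>r>0. Cc k k = of_real (- r)" if k: "k \<le> n'" for k
  proof -
    have kn: "k \<le> n" using k n' by simp
    have nk: "n - k = Suc (n' - k)" using k n' by simp
    have "hder a b (n' - k) (G k) b = hder a b (n - k) (R k) b" using GRi[OF kn bI, of "n' - k"] nk by simp
    also have "\<dots> = hder a b (n - k) (p k) b / f0 b" using RzB[OF kn] by blast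
    finally have e1: "hder a b (n' - k) (G k) b = hder a b (n - k) (p k) b / f0 b" .
    have "hder a b (n' - k) (G k) b = (\<Sum>j\<le>n'. Cc k j * hder a b (n' - k) (q j) b)" by (rule Gh[OF _ bI]) simp
    also have "\<dots> = Cc k k * hder a b (n' - k) (q k) b"
    proof (rule sum_collapse)
      fix j assume j: "j \<in> {..n'}" "j \<noteq> k"
      show "Cc k j * hder a b (n' - k) (q j) b = 0"
      proof (cases "k < j")
        case True then show ?thesis using CB[OF kn, of j] j by auto
      next
        case False
        then have "n' - k < n' - j" using j k by simp
        then show ?thesis using qzb j unfolding zero_order_def by auto
      qed
    qed (use k in auto)
    finally have e2: "hder a b (n' - k) (G k) b = Cc k k * hder a b (n' - k) (q k) b" .
    obtain r1 where r1: "r1 > 0" "hder a b (n - k) (p k) b = of_real ((-1)^(n - k) * r1)" using psb[OF kn] by blast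
    obtain r3 where r3: "r3 > 0" "hder a b (n' - k) (q k) b = of_real ((-1)^(n' - k) * r3)" using qsb[OF k] by blast
    have r2: "rf b > 0" "f0 b = of_real (rf b)" using rf bI by auto
    define s :: real where "s = (-1)^(n' - k)"
    have s: "s * s = 1" "(-1)^(n - k) = - s" unfolding s_def nk
      by (simp_all add: power_mult_distrib[symmetric])
    have "Cc k k * of_real (s * r3) = of_real (- s * r1) / of_real (rf b)"
      using e1 e2 r1 r2 r3 s unfolding s_def by simp
    then have "Cc k k * of_real (s * r3) = of_real (- s * r1 / rf b)" by simp
    then have "Cc k k * of_real (s * r3) * of_real s = of_real (- s * r1 / rf b) * of_real s" by simp
    then have "Cc k k * of_real (s * s * r3) = of_real (- (s * s) * r1 / rf b)"
      unfolding of_real_mult[symmetric] by (simp add: mult_ac)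
    then have "Cc k k * of_real r3 = of_real (- r1 / rf b)" using s(1) by simp
    then have "Cc k k = of_real (- r1 / rf b / r3)" by (rule solve_of_real) (use r3(1) in simp)
    then have "Cc k k = of_real (- (r1 / rf b / r3))" by simp
    moreover have "r1 / rf b / r3 > 0" using r1 r2 r3 by simp
    ultimately show ?thesis by blast
  qed
  have Gsum: "\<forall>x\<in>{a..b}. (\<Sum>k\<le>n. \<beta> k * G k x) = 0"
  proof
    fix x assume x: "x \<in> {a..b}"
    have "hder a b 1 (\<lambda>x. \<Sum>k\<le>n. \<beta> k * R k x) x = hder a b 1 (\<lambda>x. 1) x"
    proof (rule hder_local[OF _ x], intro ballI)
      fix y assume y: "y \<in> {a..b}"
      have "(\<Sum>k\<le>n. \<beta> k * R k y) = (\<Sum>k\<le>n. \<beta> k * p k y) / f0 y"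
        by (simp add: R_def sum_divide_distrib)
      then show "(\<Sum>k\<le>n. \<beta> k * R k y) = 1" using assms(10) y f0nz by simp
    qed
    also have "\<dots> = 0" using Cm_const[OF ab, of 1 "1::'a"] x by auto
    finally have "hder a b 1 (\<lambda>x. \<Sum>k\<le>n. \<beta> k * R k x) x = 0" .
    moreover have "hder a b 1 (\<lambda>x. \<Sum>k\<le>n. \<beta> k * R k x) x = (\<Sum>k\<le>n. \<beta> k * hder a b 1 (R k) x)"
      using Cm_lincomb[OF ab finite_atMost[of n], where f=R and c=\<beta> and m=n, THEN conjunct2, rule_format, of 1 x] RC x assms(2) by simp
    ultimately show "(\<Sum>k\<le>n. \<beta> k * G k x) = 0" using GR x by simp
  qed
  have rel: "\<beta> j * Cc j j + \<beta> (Suc j) * Cc (Suc j) j = 0" if j: "j \<le> n'" for j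
  proof -
    have "\<forall>x\<in>{a..b}. (\<Sum>j\<le>n'. (\<Sum>k\<le>n. \<beta> k * Cc k j) * q j x) = 0"
    proof
      fix x assume x: "x \<in> {a..b}"
      have "(\<Sum>j\<le>n'. (\<Sum>k\<le>n. \<beta> k * Cc k j) * q j x) = (\<Sum>j\<le>n'. \<Sum>k\<le>n. \<beta> k * Cc k j * q j x)"
        by (simp add: sum_distrib_right)
      also have "\<dots> = (\<Sum>k\<le>n. \<Sum>j\<le>n'. \<beta> k * Cc k j * q j x)" by (rule sum.swap)
      also have "\<dots> = (\<Sum>k\<le>n. \<beta> k * G k x)" by (simp add: G_def sum_distrib_left mult.assoc)
      finally show "(\<Sum>j\<le>n'. (\<Sum>k\<le>n. \<beta> k * Cc k j) * q j x) = 0" using Gsum x by simp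
    qed
    then have "\<forall>j\<le>n'. (\<Sum>k\<le>n. \<beta> k * Cc k j) = 0" by (rule qind)
    then have "(\<Sum>k\<le>n. \<beta> k * Cc k j) = 0" using j by blast
    moreover have "(\<Sum>k\<le>n. \<beta> k * Cc k j) = \<beta> j * Cc j j + \<beta> (Suc j) * Cc (Suc j) j"
    proof (rule sum_collapse2)
      fix k assume k: "k \<in> {..n}" "k \<noteq> j" "k \<noteq> Suc j"
      show "\<beta> k * Cc k j = 0"
      proof (cases "k < j")
        case True then show ?thesis using CB[of k j] k j by auto
      next
        case False then show ?thesis using CA[of k j] k j by auto
      qed
    qed (use j n' in auto)
    ultimately show ?thesis by simp
  qed
  have b0: "\<exists>r>0. \<beta> 0 = of_real r"
  proof -
    have "f0 a = (\<Sum>k\<le>n. \<beta> k * p k a)" using assms(10) aI by blast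
    also have "\<dots> = \<beta> 0 * p 0 a"
    proof (rule sum_collapse)
      fix k assume k: "k \<in> {..n}" "k \<noteq> 0"
      have z: "\<forall>j<k. hder a b j (p k) a = 0" using pza k(1) unfolding zero_order_def by auto
      have "0 < k" using k by simp
      then have "hder a b 0 (p k) a = 0" using z by blast
      then show "\<beta> k * p k a = 0" by simp
    qed auto
    finally have e: "f0 a = \<beta> 0 * p 0 a" .
    obtain r1 where r1: "r1 > 0" "hder a b 0 (p 0) a = of_real r1" using psa[of 0] by auto
    have r2: "rf a > 0" "f0 a = of_real (rf a)" using rf aI by auto
    have "\<beta> 0 * of_real r1 = of_real (rf a)" using e r1 r2 by simp
    then have "\<beta> 0 = of_real (rf a / r1)" by (rule solve_of_real) (use r1(1) in simp)
    moreover have "rf a / r1 > 0" using r1 r2 by simp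
    ultimately show ?thesis by blast
  qed
  have "\<exists>r>0. \<beta> j = of_real r" if "j \<le> n" for j
    using that
  proof (induction j)
    case 0 show ?case by (rule b0)
  next
    case (Suc j)
    have j: "j \<le> n'" using Suc.prems n' by simp
    obtain rb where rb: "rb > 0" "\<beta> j = of_real rb" using Suc by auto
    obtain c1 where c1: "c1 > 0" "Cc (Suc j) j = of_real c1" using CL[of "Suc j"] Suc.prems by auto
    obtain c2 where c2: "c2 > 0" "Cc j j = of_real (- c2)" using CD[OF j] by auto
    have "\<beta> (Suc j) * of_real c1 = of_real (rb * c2)" using rel[OF j] rb c1 c2
      by (simp add: algebra_simps add_eq_0_iff)
    then have "\<beta> (Suc j) = of_real (rb * c2 / c1)" by (rule solve_of_real) (use c1(1) in simp)
    moreover have "rb * c2 / c1 > 0" using rb c1 c2 by simp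
    ultimately show ?case by blast
  qed
  then show ?thesis by blast
qed

end
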